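(* Let $\chi_1,\dots,\chi_n,\hbar,q_1,\dots,q_n$ be indeterminates and work in the field of rational functions over $\mathbb C$. Let $M(\chi)$ be the $2n\times2n$ block matrix $\begin{bmatrix}P&Q\\S&U\end{bmatrix}$ with $n\times n$ blocks: $P_{ii}=\chi_i$, $P_{ij}=\frac{\hbar}{1-q_i/q_j}$ ($i\ne j$); $U_{ii}=-\chi_{n+1-i}$, $U_{ij}=\frac{\hbar}{1-q_{n+1-j}/q_{n+1-i}}$ ($i\ne j$); $Q_{ij}=\frac{\hbar}{1-q_iq_{n+1-j}}$ if $i+j\ne n+1$ and $Q_{ij}=0$ if $i+j=n+1$; $S_{ij}=\frac{\hbar}{1-q_{n+1-i}^{-1}q_j^{-1}}$ if $i+j\ne n+1$ and $S_{ij}=0$ if $i+j=n+1$. Let $A(\chi)$ be the $n\times n$ matrix with $A_{ii}=\chi_i$ and $$A_{ij}=\frac{\hbar(1-q_i)(1+q_j)}{(1-q_i/q_j)(1-q_iq_j)}\quad(i\ne j),$$ and $A(-\chi)$ the same matrix with each $\chi_i$ replaced by $-\chi_i$. Then $$\det M(\chi)=\det A(\chi)\cdot\det A(-\chi).$$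
   Context: In the paper $M(\chi)$ is the matrix $\Theta(-\mathbf e_1)$ for type $D_n$ and $\chi_i=\Delta_{-\mathbf e_i}$; the identity is a formal one. *)

theory Defs
  imports "Jordan_Normal_Form.Determinant"
begin

text \<open>Indices are 0-based: the paper's index i in 1..n is i-1 here, so the paper's
  n+1-i becomes n-1-i.\<close>

definition blkP :: "nat \<Rightarrow> (nat \<Rightarrow> complex) \<Rightarrow> complex \<Rightarrow> (nat \<Rightarrow> complex) \<Rightarrow> complex mat" where
  "blkP n chi h q = mat n n (\<lambda>(i,j). if i = j then chi i else h / (1 - q i / q j))"

definition blkU :: "nat \<Rightarrow> (nat \<Rightarrow> complex) \<Rightarrow> complex \<Rightarrow> (nat \<Rightarrow> complex) \<Rightarrow> complex mat" where
  "blkU n chi h q = mat n n (\<lambda>(i,j). if i = j then - chi (n - 1 - i)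
      else h / (1 - q (n - 1 - j) / q (n - 1 - i)))"

definition blkQ :: "nat \<Rightarrow> complex \<Rightarrow> (nat \<Rightarrow> complex) \<Rightarrow> complex mat" where
  "blkQ n h q = mat n n (\<lambda>(i,j). if i + j = n - 1 then 0
      else h / (1 - q i * q (n - 1 - j)))"

definition blkS :: "nat \<Rightarrow> complex \<Rightarrow> (nat \<Rightarrow> complex) \<Rightarrow> complex mat" where
  "blkS n h q = mat n n (\<lambda>(i,j). if i + j = n - 1 then 0
      else h / (1 - inverse (q (n - 1 - i)) * inverse (q j)))"

definition matM :: "nat \<Rightarrow> (nat \<Rightarrow> complex) \<Rightarrow> complex \<Rightarrow> (nat \<Rightarrow> complex) \<Rightarrow> complex mat" where
  "matM n chi h q = four_block_mat (blkP n chi h q) (blkQ n h q) (blkS n h q) (blkU n chi h q)"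

definition matA :: "nat \<Rightarrow> (nat \<Rightarrow> complex) \<Rightarrow> complex \<Rightarrow> (nat \<Rightarrow> complex) \<Rightarrow> complex mat" where
  "matA n chi h q = mat n n (\<lambda>(i,j). if i = j then chi i
      else h * (1 - q i) * (1 + q j) / ((1 - q i / q j) * (1 - q i * q j)))"

end

theory Submission imports Defs begin

lemma prod_perm_split:
  fixes X :: "'a::comm_ring_1 mat"
  assumes p: "p permutes {0..<n}"
    and off: "\<forall>i<n. \<forall>j<n. i\<noteq>j \<longrightarrow> X$$(i,j) = u i * v j * c i j"
  shows "(\<Prod>i=0..<n. X$$(i,p i)) =
     (\<Prod>i=0..<n. if p i = i then X$$(i,i) else c i (p i)) * (\<Prod>i=0..<n. if p i = i then 1 else u i * v i)"
proof -
  have pin: "i < n \<Longrightarrow> p i < n" for i using p permutes_in_image by fastforce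
  have inj: "inj p" using p by (rule permutes_inj)
  define g where "g j = (if p j = j then 1 else v j)" for j
  have "(\<Prod>i=0..<n. X$$(i,p i)) = (\<Prod>i=0..<n. (if p i = i then X$$(i,i) else c i (p i)) * ((if p i = i then 1 else u i) * g (p i)))"
  proof (rule prod.cong[OF refl])
    fix i assume "i \<in> {0..<n}"
    then have i: "i < n" by simp
    have "p (p i) = p i \<longleftrightarrow> p i = i" using inj by (auto dest: injD)
    then show "X$$(i,p i) = (if p i = i then X$$(i,i) else c i (p i)) * ((if p i = i then 1 else u i) * g (p i))"
      using off i pin[OF i] unfolding g_def by (auto simp: mult_ac)
  qed
  also have "\<dots> = (\<Prod>i=0..<n. if p i = i then X$$(i,i) else c i (p i)) * ((\<Prod>i=0..<n. if p i = i then 1 else u i) * (\<Prod>i=0..<n. g (p i)))"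
    by (simp add: prod.distrib)
  also have "(\<Prod>i=0..<n. g (p i)) = (\<Prod>i=0..<n. g i)"
    using prod.permute[OF p, of g] by (simp add: comp_def)
  also have "(\<Prod>i=0..<n. if p i = i then 1 else u i) * (\<Prod>i=0..<n. g i) = (\<Prod>i=0..<n. if p i = i then 1 else u i * v i)"
    unfolding g_def prod.distrib[symmetric] by (rule prod.cong) auto
  finally show ?thesis .
qed

lemma det_scale_inv:
  fixes X Y :: "'a::comm_ring_1 mat"
  assumes X: "X \<in> carrier_mat n n" and Y: "Y \<in> carrier_mat n n"
    and offX: "\<forall>i<n. \<forall>j<n. i\<noteq>j \<longrightarrow> X$$(i,j) = u i * v j * c i j"
    and offY: "\<forall>i<n. \<forall>j<n. i\<noteq>j \<longrightarrow> Y$$(i,j) = u' i * v' j * c i j"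
    and diag: "\<forall>i<n. X$$(i,i) = Y$$(i,i)"
    and uv: "\<forall>i<n. u i * v i = u' i * v' i"
  shows "det X = det Y"
  unfolding det_def'[OF X] det_def'[OF Y]
proof (rule sum.cong[OF refl])
  fix p assume "p \<in> {p. p permutes {0..<n}}"
  then have p: "p permutes {0..<n}" by simp
  have e1: "(\<Prod>i=0..<n. if p i = i then X$$(i,i) else c i (p i)) = (\<Prod>i=0..<n. if p i = i then Y$$(i,i) else c i (p i))"
    by (rule prod.cong) (use diag in auto)
  have e2: "(\<Prod>i=0..<n. if p i = i then 1 else u i * v i) = (\<Prod>i=0..<n. if p i = i then 1 else u' i * v' i)"
    by (rule prod.cong) (use uv in auto)
  show "signof p * (\<Prod>i=0..<n. X$$(i,p i)) = signof p * (\<Prod>i=0..<n. Y$$(i,p i))"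
    unfolding prod_perm_split[OF p offX] prod_perm_split[OF p offY] e1 e2 ..
qed

definition revm :: "nat \<Rightarrow> complex \<Rightarrow> complex mat" where
  "revm n c = mat n n (\<lambda>(i,j). if i + j = n - 1 then c else 0)"

lemma revm_carrier[simp]: "revm n c \<in> carrier_mat n n" by (simp add: revm_def)
lemma revm_dims[simp]: "dim_row (revm n c) = n" "dim_col (revm n c) = n" by (auto simp add: revm_def)

lemma revm_right:
  assumes X: "X \<in> carrier_mat m n" and i: "i < m" and j: "j < n"
  shows "(X * revm n c) $$ (i,j) = c * X $$ (i, n - 1 - j)"
proof -
  have "(X * revm n c) $$ (i,j) = (\<Sum>k=0..<n. X$$(i,k) * (if k = n - 1 - j then c else 0))"
    using X i j by (auto simp: revm_def scalar_prod_def intro!: sum.cong)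
  also have "\<dots> = c * X $$ (i, n - 1 - j)" using j by (simp add: sum.delta' if_distrib cong: if_cong)
  finally show ?thesis .
qed

lemma revm_left:
  assumes X: "X \<in> carrier_mat n m" and i: "i < n" and j: "j < m"
  shows "(revm n c * X) $$ (i,j) = c * X $$ (n - 1 - i, j)"
proof -
  have "(revm n c * X) $$ (i,j) = (\<Sum>k=0..<n. (if i + k = n - 1 then c else 0) * X$$(k,j))"
    using X i j by (simp add: revm_def scalar_prod_def)
  also have "\<dots> = (\<Sum>k=0..<n. (if k = n - 1 - i then c * X$$(k,j) else 0))"
    by (rule sum.cong) (use i in auto)
  also have "\<dots> = c * X $$ (n - 1 - i, j)" using i by (simp add: sum.delta')
  finally show ?thesis .
qed

lemma alg1:
  fixes x y h :: complex
  assumes "x \<noteq> 0" "y \<noteq> 0" "x \<noteq> y"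
  shows "h / (1 - x / y) + h / (1 - y / x) = h"
proof -
  have d: "y - x \<noteq> 0" using assms by simp
  have "1 - x / y = (y - x) / y" using assms by (simp add: field_simps)
  then have e1: "h / (1 - x / y) = h * y / (y - x)" by simp
  have "1 - y / x = - ((y - x) / x)" using assms by (simp add: field_simps)
  then have e2: "h / (1 - y / x) = - (h * x / (y - x))" by simp
  have "h * y / (y - x) + - (h * x / (y - x)) = h * (y - x) / (y - x)"
    by (simp add: diff_divide_distrib[symmetric] algebra_simps)
  also have "\<dots> = h" using d by simp
  finally show ?thesis unfolding e1 e2 .
qed

lemma alg2:
  fixes x y h :: complex
  assumes "x \<noteq> 0" "y \<noteq> 0" "x * y \<noteq> 1"
  shows "h / (1 - x * y) + h / (1 - inverse x * inverse y) = h"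
proof -
  have d: "1 - x * y \<noteq> 0" using assms by simp
  have "1 - inverse x * inverse y = - ((1 - x * y) / (x * y))" using assms by (simp add: field_simps)
  then have e2: "h / (1 - inverse x * inverse y) = - (h * (x * y) / (1 - x * y))" by simp
  have "h / (1 - x * y) + - (h * (x * y) / (1 - x * y)) = h * (1 - x * y) / (1 - x * y)"
    by (simp add: diff_divide_distrib[symmetric] algebra_simps)
  also have "\<dots> = h" using d by simp
  finally show ?thesis unfolding e2 .
qed

lemma alg3:
  fixes x y h :: complex
  assumes "x \<noteq> 0" "y \<noteq> 0" "x \<noteq> y" "x * y \<noteq> 1"
  shows "h / (1 - x / y) - h / (1 - x * y) = (h * x) * (1 - y^2) * (1 / ((y - x) * (1 - x * y)))"
    and "h * (1 - x) * (1 + y) / ((1 - x / y) * (1 - x * y)) = (h * (1 - x)) * (y * (1 + y)) * (1 / ((y - x) * (1 - x * y)))"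
proof -
  have a: "1 - x * y \<noteq> 0" "y - x \<noteq> 0" using assms by auto
  have b: "1 - x / y = (y - x) / y" using assms by (simp add: field_simps)
  show "h / (1 - x / y) - h / (1 - x * y) = (h * x) * (1 - y^2) * (1 / ((y - x) * (1 - x * y)))"
    unfolding b using assms a by (simp add: field_simps power2_eq_square)
  show "h * (1 - x) * (1 + y) / ((1 - x / y) * (1 - x * y)) = (h * (1 - x)) * (y * (1 + y)) * (1 / ((y - x) * (1 - x * y)))"
    unfolding b using assms a by (simp add: field_simps)
qed

definition matB :: "nat \<Rightarrow> (nat \<Rightarrow> complex) \<Rightarrow> complex \<Rightarrow> (nat \<Rightarrow> complex) \<Rightarrow> complex mat" where
  "matB n d h q = mat n n (\<lambda>(i,j). if i = j then d i else h / (1 - q i / q j) - h / (1 - q i * q j))"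

lemma det_matB:
  assumes q0: "\<forall>i<n. q i \<noteq> 0"
    and qd: "\<forall>i<n. \<forall>j<n. i \<noteq> j \<longrightarrow> q i \<noteq> q j"
    and qp: "\<forall>i<n. \<forall>j<n. i \<noteq> j \<longrightarrow> q i * q j \<noteq> 1"
  shows "det (matB n d h q) = det (matA n d h q)"
proof (rule det_scale_inv[where c = "\<lambda>i j. 1 / ((q j - q i) * (1 - q i * q j))"
        and u = "\<lambda>i. h * q i" and v = "\<lambda>j. 1 - q j ^ 2"
        and u' = "\<lambda>i. h * (1 - q i)" and v' = "\<lambda>j. q j * (1 + q j)"])
  show "matB n d h q \<in> carrier_mat n n" "matA n d h q \<in> carrier_mat n n"
    by (auto simp: matB_def matA_def)
  show "\<forall>i<n. \<forall>j<n. i \<noteq> j \<longrightarrow> matB n d h q $$ (i, j) = h * q i * (1 - q j ^ 2) * (1 / ((q j - q i) * (1 - q i * q j)))"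
    using q0 qd qp by (auto simp: matB_def alg3(1))
  show "\<forall>i<n. \<forall>j<n. i \<noteq> j \<longrightarrow> matA n d h q $$ (i, j) = h * (1 - q i) * (q j * (1 + q j)) * (1 / ((q j - q i) * (1 - q i * q j)))"
    using q0 qd qp by (auto simp: matA_def alg3(2) simp del: times_divide_eq_right)
  show "\<forall>i<n. matB n d h q $$ (i, i) = matA n d h q $$ (i, i)"
    by (auto simp: matB_def matA_def)
  show "\<forall>i<n. h * q i * (1 - q i ^ 2) = h * (1 - q i) * (q i * (1 + q i))"
    by (auto simp: power2_eq_square algebra_simps)
qed

definition matN :: "nat \<Rightarrow> (nat \<Rightarrow> complex) \<Rightarrow> complex \<Rightarrow> (nat \<Rightarrow> complex) \<Rightarrow> complex mat" where
  "matN n d h q = mat n n (\<lambda>(i,j). if i = j then - d i else h / (1 - q j / q i) - h / (1 - q i * q j))"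

lemma revm_sq: "revm n 1 * revm n 1 = 1\<^sub>m n"
proof (rule eq_matI)
  fix i j assume "i < dim_row (1\<^sub>m n)" "j < dim_col (1\<^sub>m n)"
  then have i: "i < n" and j: "j < n" by auto
  show "(revm n 1 * revm n 1) $$ (i, j) = 1\<^sub>m n $$ (i, j)"
  proof -
    have "(revm n 1 * revm n 1) $$ (i, j) = 1 * revm n 1 $$ (n - 1 - i, j)"
      by (rule revm_left[OF revm_carrier i j])
    then show ?thesis using i j by (auto simp: revm_def)
  qed
qed auto

lemma det_revm_conj:
  assumes N: "N \<in> carrier_mat n n"
  shows "det (revm n 1 * N * revm n 1) = det N"
proof -
  have "det (revm n 1 * N * revm n 1) = det (revm n 1) * det N * det (revm n 1)"
    using det_mult[OF mult_carrier_mat[OF revm_carrier N] revm_carrier] det_mult[OF revm_carrier N] by simp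
  also have "\<dots> = det (revm n 1 * revm n 1) * det N"
    using det_mult[OF revm_carrier revm_carrier] by simp
  finally show ?thesis by (simp add: revm_sq)
qed

theorem mainTheorem15:
  fixes n :: nat and chi q :: "nat \<Rightarrow> complex" and h :: complex
  assumes "\<forall>i<n. q i \<noteq> 0"
    and "\<forall>i<n. \<forall>j<n. i \<noteq> j \<longrightarrow> q i \<noteq> q j"
    and "\<forall>i<n. \<forall>j<n. i \<noteq> j \<longrightarrow> q i * q j \<noteq> 1"
  shows "det (matM n chi h q) = det (matA n chi h q) * det (matA n (\<lambda>i. - chi i) h q)"
proof -
  note q0 = assms(1) and qd = assms(2) and qp = assms(3)
  define P where "P = blkP n chi h q"
  define Q where "Q = blkQ n h q"
  define S where "S = blkS n h q"
  define U where "U = blkU n chi h q"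
  define R where "R = revm n (-1)"
  define T where "T = four_block_mat (1\<^sub>m n) (0\<^sub>m n n) R (1\<^sub>m n)"
  have cP: "P \<in> carrier_mat n n" and cQ: "Q \<in> carrier_mat n n" and cS: "S \<in> carrier_mat n n"
    and cU: "U \<in> carrier_mat n n" and cR: "R \<in> carrier_mat n n"
    by (auto simp: P_def Q_def S_def U_def R_def blkP_def blkQ_def blkS_def blkU_def)
  have M: "matM n chi h q = four_block_mat P Q S U"
    by (simp add: matM_def P_def Q_def S_def U_def)
  have cM: "four_block_mat P Q S U \<in> carrier_mat (n+n) (n+n)" using cP cQ cS cU by auto
  have cT: "T \<in> carrier_mat (n+n) (n+n)" using cR by (auto simp: T_def)
  have detT: "det T = 1" unfolding T_def
    by (subst det_four_block_mat_upper_right_zero[of _ n _ n]) (use cR in auto)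
  define X11 where "X11 = P + Q * R"
  define X21 where "X21 = S + U * R"
  have cX11: "X11 \<in> carrier_mat n n" and cX21: "X21 \<in> carrier_mat n n"
    using cP cQ cS cU cR by (auto simp: X11_def X21_def)
  have MT: "four_block_mat P Q S U * T = four_block_mat X11 Q X21 U"
    unfolding T_def X11_def X21_def
    by (subst mult_four_block_mat[OF cP cQ cS cU one_carrier_mat zero_carrier_mat cR one_carrier_mat]) (use cP cQ cS cU cR in auto)
  have TMT: "T * four_block_mat X11 Q X21 U = four_block_mat X11 Q (R * X11 + X21) (R * Q + U)"
    unfolding T_def
    by (subst mult_four_block_mat[OF one_carrier_mat zero_carrier_mat cR one_carrier_mat cX11 cQ cX21 cU]) (use cX11 cQ cX21 cU cR in auto)
  have BL: "R * X11 + X21 = 0\<^sub>m n n"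
  proof (rule eq_matI)
    fix i j assume "i < dim_row (0\<^sub>m n n :: complex mat)" "j < dim_col (0\<^sub>m n n :: complex mat)"
    then have i: "i < n" and j: "j < n" by auto
    have nj: "n - 1 - j < n" and ni: "n - 1 - i < n" using i j by auto
    have e1: "(R * X11) $$ (i,j) = (-1) * (P $$ (n - 1 - i, j) + (-1) * Q $$ (n - 1 - i, n - 1 - j))"
    proof -
      have "(R * X11) $$ (i,j) = (-1) * X11 $$ (n - 1 - i, j)"
        unfolding R_def by (rule revm_left[OF cX11[unfolded R_def] i j])
      moreover have "(Q * R) $$ (n - 1 - i, j) = (-1) * Q $$ (n - 1 - i, n - 1 - j)"
        unfolding R_def by (rule revm_right[OF cQ ni j])
      ultimately show ?thesis using cP cQ cR ni j by (simp add: X11_def)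
    qed
    have e2: "X21 $$ (i,j) = S $$ (i,j) + (-1) * U $$ (i, n - 1 - j)"
      unfolding X21_def R_def using cS cU i j by (simp add: revm_right[OF cU i j])
    define a where "a = n - 1 - i"
    have a: "a < n" "n - 1 - a = i" using i by (auto simp: a_def)
    have ai: "n - Suc i = a" by (simp add: a_def)
    have "- P $$ (a, j) + Q $$ (a, n - 1 - j) + S $$ (i,j) - U $$ (i, n - 1 - j) = 0"
    proof (cases "a = j")
      case True
      then show ?thesis using a i j by (auto simp: P_def Q_def S_def U_def blkP_def blkQ_def blkS_def blkU_def)
    next
      case False
      have ij: "i + j \<noteq> n - 1" "a + (n - 1 - j) \<noteq> n - 1" "i \<noteq> n - 1 - j" using False a j by auto
      have qa: "q a \<noteq> 0" "q j \<noteq> 0" "q a \<noteq> q j" "q a * q j \<noteq> 1"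
        using q0 qd qp a j False by auto
      have "- P $$ (a, j) + Q $$ (a, n - 1 - j) + S $$ (i,j) - U $$ (i, n - 1 - j)
         = (h / (1 - q a * q j) + h / (1 - inverse (q a) * inverse (q j))) - (h / (1 - q a / q j) + h / (1 - q j / q a))"
        using ij a i j False by (simp add: ai P_def Q_def S_def U_def blkP_def blkQ_def blkS_def blkU_def)
      also have "\<dots> = 0" using alg1[OF qa(1,2,3)] alg2[OF qa(1,2,4)] by simp
      finally show ?thesis .
    qed
    moreover have "(R * X11 + X21) $$ (i,j) = (R * X11) $$ (i,j) + X21 $$ (i,j)"
      using cR cX11 cX21 i j by (simp del: index_mult_mat)
    ultimately show "(R * X11 + X21) $$ (i,j) = 0\<^sub>m n n $$ (i,j)"
      using i j unfolding e1 e2 by (simp add: a_def algebra_simps del: index_mult_mat)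
  qed (use cR cX11 cX21 in auto)
  have B11: "X11 = matB n chi h q"
  proof (rule eq_matI)
    fix i j assume "i < dim_row (matB n chi h q)" "j < dim_col (matB n chi h q)"
    then have i: "i < n" and j: "j < n" by (auto simp: matB_def)
    have "X11 $$ (i,j) = P $$ (i,j) + (-1) * Q $$ (i, n - 1 - j)"
      unfolding X11_def R_def using cP cQ i j by (simp add: revm_right[OF cQ i j])
    also have "\<dots> = matB n chi h q $$ (i,j)"
      using i j by (auto simp: P_def Q_def blkP_def blkQ_def matB_def)
    finally show "X11 $$ (i,j) = matB n chi h q $$ (i,j)" .
  qed (use cX11 in \<open>auto simp: matB_def\<close>)
  have B22: "R * Q + U = revm n 1 * matN n chi h q * revm n 1"
  proof (rule eq_matI)
    fix i j assume "i < dim_row (revm n 1 * matN n chi h q * revm n 1)" "j < dim_col (revm n 1 * matN n chi h q * revm n 1)"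
    then have i: "i < n" and j: "j < n" by auto
    have cN: "matN n chi h q \<in> carrier_mat n n" by (simp add: matN_def)
    have cRN: "revm n 1 * matN n chi h q \<in> carrier_mat n n"
      by (rule mult_carrier_mat[OF revm_carrier]) (simp add: matN_def)
    have nj: "n - 1 - j < n" and ni: "n - 1 - i < n" using i j by auto
    have "(R * Q + U) $$ (i,j) = (-1) * Q $$ (n - 1 - i, j) + U $$ (i,j)"
      unfolding R_def using cQ cU i j by (simp add: revm_left[OF cQ i j])
    also have "\<dots> = matN n chi h q $$ (n - 1 - i, n - 1 - j)"
      using i j by (auto simp: Q_def U_def blkQ_def blkU_def matN_def)
    also have "\<dots> = 1 * (1 * matN n chi h q $$ (n - 1 - i, n - 1 - j))" by simp
    also have "\<dots> = 1 * (revm n 1 * matN n chi h q) $$ (i, n - 1 - j)"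
      using revm_left[OF cN i nj, of 1] by simp
    also have "\<dots> = (revm n 1 * matN n chi h q * revm n 1) $$ (i,j)"
      by (rule revm_right[OF cRN i j, symmetric])
    finally show "(R * Q + U) $$ (i,j) = (revm n 1 * matN n chi h q * revm n 1) $$ (i,j)" .
  qed (use cR cQ cU in \<open>auto simp: matN_def\<close>)
  have NT: "transpose_mat (matN n chi h q) = matB n (\<lambda>i. - chi i) h q"
    by (rule eq_matI) (auto simp: matN_def matB_def mult.commute)
  have cN: "matN n chi h q \<in> carrier_mat n n" by (simp add: matN_def)
  have "det (matM n chi h q) = det T * det (four_block_mat P Q S U) * det T"
    using detT M by simp
  also have "\<dots> = det (T * (four_block_mat P Q S U * T))"
    using det_mult[OF cT mult_carrier_mat[OF cM cT]] det_mult[OF cM cT] by simp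
  also have "\<dots> = det (four_block_mat X11 Q (0\<^sub>m n n) (R * Q + U))"
    unfolding MT TMT BL ..
  also have "\<dots> = det X11 * det (R * Q + U)"
    by (rule det_four_block_mat_lower_left_zero[OF cX11 cQ refl]) (use cR cQ cU in auto)
  also have "det (R * Q + U) = det (matN n chi h q)"
    unfolding B22 by (rule det_revm_conj[OF cN])
  also have "\<dots> = det (matB n (\<lambda>i. - chi i) h q)"
    unfolding NT[symmetric] by (rule det_transpose[OF cN, symmetric])
  finally show ?thesis
    unfolding B11 using det_matB[OF q0 qd qp] by simp
qed

end
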